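(* For stochastic CA $\mathcal{A}_1,\mathcal{A}_2$: if $\mathcal{A}_1\sqsubseteq^S_i\mathcal{A}_2$ then $\mathcal{A}_1\sqsubseteq^N_i\mathcal{A}_2$; if $\mathcal{A}_1\sqsubseteq^S_\pi\mathcal{A}_2$ then $\mathcal{A}_1\sqsubseteq^N_\pi\mathcal{A}_2$; and if $\mathcal{A}_1\sqsubseteq^S_m\mathcal{A}_2$ then $\mathcal{A}_1\sqsubseteq^N_m\mathcal{A}_2$.
   Context: A stochastic CA is $(Q,R,V,V',f)$ with $Q$ finite states, $R$ finite random symbols, $V=\{v_1,\dots,v_r\}$, $V'=\{v'_1,\dots,v'_{r'}\}$ finite subsets of $\mathbb{Z}$, $f:Q^r\times R^{r'}\to Q$; explicit global function $F(c,s)_z=f((c_{z+v_1},\dots,c_{z+v_r}),(s_{z+v'_1},\dots,s_{z+v'_{r'}}))$. Non-deterministic global function $N_F(c)=\{F(c,s):s\in R^{\mathbb{Z}}\}$; stochastic global function $S_F(c)$ = law of $F(c,s)$ for $s$ distributed by the uniform Bernoulli measure on $R^{\mathbb{Z}}$. Iterates: $F^0(c)=c$, $F^{t+1}(c,s^1,\dots,s^{t+1})=F(F^t(c,s^1,\dots,s^t),s^{t+1})$. Restriction: for injective $i:Q'\to Q$ with $Y=i(Q')^{\mathbb{Z}}$ satisfying $F(Y,R^{\mathbb{Z}})\subseteq Y$, the $i$-restriction has states $Q'$, random symbols $R$, explicit global function $I^{-1}(F(I(c),s))$ ($I$ the cellwise extension of $i$). Projection: for surjective $\pi:Q\to Q'$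 with cellwise extension $\Pi$ such that $\Pi(F(c,s))=\Pi(F(c',s))$ whenever $\Pi(c)=\Pi(c')$, the $\pi$-projection has states $Q'$, random symbols $R$, explicit global function $(c',s)\mapsto\Pi(F(c,s))$ for any $c\in\Pi^{-1}(c')$. Rescaling with $m,t\ge1,k\in\mathbb{Z}$: $\mathcal{A}^{\langle m,t,k\rangle}$ has states $Q^m$, random symbols $(R^m)^t$, explicit global function $b_m\circ\sigma_k\circ F^t(b_m^{-1}(c),b_m^{-1}(s^1),\dots,b_m^{-1}(s^t))$ where $s^i_j=(s_j)_i$, $\sigma_k(c)_z=c_{z+k}$, $b_m(c)_z=(c_{mz},\dots,c_{mz+m-1})$. For $X\in\{S,N\}$: $\mathcal{A}_1\sqsubseteq^X_i\mathcal{A}_2$ (resp. $\sqsubseteq^X_\pi$, $\sqsubseteq^X_m$) iff there are $m_1,m_2,t_1,t_2,k_1,k_2$ such that $\mathcal{A}_1^{\langle m_1,t_1,k_1\rangle}$ has the same stochastic (for $X=S$) or non-deterministic (for $X=N$) global function as some $i$-restriction (resp. some $\pi$-projection, resp. some $\pi$-projection of some $i$-restriction) of $\mathcal{A}_2^{\langle m_2,t_2,k_2\rangle}$. *)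

theory Defs
  imports "HOL-Probability.Probability"
begin

text \<open>A stochastic CA (Q,R,V,V',f). The neighbourhoods V = {v_1..v_r}, V' = {v'_1..v'_r'}
  are given as lists (fixing the enumeration used by the local rule f).\<close>
record ('q, 'r) sca =
  states :: "'q set"
  rands :: "'r set"
  nbh :: "int list"
  rnbh :: "int list"
  rule :: "'q list \<Rightarrow> 'r list \<Rightarrow> 'q"

definition is_sca :: "('q, 'r) sca \<Rightarrow> bool" where
  "is_sca A \<longleftrightarrow> finite (states A) \<and> finite (rands A) \<and> rands A \<noteq> {} \<and>
     (\<forall>qs rs. length qs = length (nbh A) \<and> set qs \<subseteq> states A \<and>
              length rs = length (rnbh A) \<and> set rs \<subseteq> rands A \<longrightarrow> rule A qs rs \<in> states A)"

definition conf :: "'a set \<Rightarrow> (int \<Rightarrow> 'a) set" where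
  "conf Q = {c. \<forall>z. c z \<in> Q}"

definition GF :: "('q, 'r) sca \<Rightarrow> (int \<Rightarrow> 'q) \<Rightarrow> (int \<Rightarrow> 'r) \<Rightarrow> (int \<Rightarrow> 'q)" where
  "GF A c s = (\<lambda>z. rule A (map (\<lambda>v. c (z + v)) (nbh A)) (map (\<lambda>v. s (z + v)) (rnbh A)))"

text \<open>Iterates: giter F t c ss uses random fields ss 0, ..., ss (t-1) (= s^1,...,s^t).\<close>
primrec giter :: "((int \<Rightarrow> 'q) \<Rightarrow> (int \<Rightarrow> 'r) \<Rightarrow> (int \<Rightarrow> 'q)) \<Rightarrow> nat \<Rightarrow> (int \<Rightarrow> 'q)
    \<Rightarrow> (nat \<Rightarrow> int \<Rightarrow> 'r) \<Rightarrow> (int \<Rightarrow> 'q)" where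
  "giter F 0 c ss = c"
| "giter F (Suc n) c ss = F (giter F n c ss) (ss n)"

definition blk :: "nat \<Rightarrow> (int \<Rightarrow> 'a) \<Rightarrow> (int \<Rightarrow> 'a list)" where
  "blk m c = (\<lambda>z. map (\<lambda>j. c (int m * z + int j)) [0..<m])"

definition unblk :: "nat \<Rightarrow> (int \<Rightarrow> 'a list) \<Rightarrow> (int \<Rightarrow> 'a)" where
  "unblk m c = (\<lambda>z. c (z div int m) ! nat (z mod int m))"

definition shift :: "int \<Rightarrow> (int \<Rightarrow> 'a) \<Rightarrow> (int \<Rightarrow> 'a)" where
  "shift k c = (\<lambda>z. c (z + k))"

text \<open>Q^m and (R^m)^t as sets of lists.\<close>
definition states_pow :: "'a set \<Rightarrow> nat \<Rightarrow> 'a list set" where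
  "states_pow Q m = {xs. length xs = m \<and> set xs \<subseteq> Q}"

definition rand_pow :: "'a set \<Rightarrow> nat \<Rightarrow> nat \<Rightarrow> 'a list list set" where
  "rand_pow R m t = {ys. length ys = t \<and> (\<forall>y\<in>set ys. y \<in> states_pow R m)}"

definition rescale :: "('q, 'r) sca \<Rightarrow> nat \<Rightarrow> nat \<Rightarrow> int
    \<Rightarrow> (int \<Rightarrow> 'q list) \<Rightarrow> (int \<Rightarrow> 'r list list) \<Rightarrow> (int \<Rightarrow> 'q list)" where
  "rescale A m t k c s =
     blk m (shift k (giter (GF A) t (unblk m c) (\<lambda>i. unblk m (\<lambda>j. s j ! i))))"

definition SF :: "'q set \<Rightarrow> 'r set \<Rightarrow> ((int \<Rightarrow> 'q) \<Rightarrow> (int \<Rightarrow> 'r) \<Rightarrow> (int \<Rightarrow> 'q))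
    \<Rightarrow> (int \<Rightarrow> 'q) \<Rightarrow> (int \<Rightarrow> 'q) measure" where
  "SF Q R F c = distr (PiM (UNIV :: int set) (\<lambda>_. uniform_count_measure R))
                      (PiM (UNIV :: int set) (\<lambda>_. count_space Q)) (F c)"

definition NF :: "'r set \<Rightarrow> ((int \<Rightarrow> 'q) \<Rightarrow> (int \<Rightarrow> 'r) \<Rightarrow> (int \<Rightarrow> 'q))
    \<Rightarrow> (int \<Rightarrow> 'q) \<Rightarrow> (int \<Rightarrow> 'q) set" where
  "NF R F c = F c ` conf R"

datatype xmode = XS | XN

definition same :: "xmode \<Rightarrow> 'q set \<Rightarrow> 'r1 set \<Rightarrow> ((int \<Rightarrow> 'q) \<Rightarrow> (int \<Rightarrow> 'r1) \<Rightarrow> (int \<Rightarrow> 'q))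
    \<Rightarrow> 'r2 set \<Rightarrow> ((int \<Rightarrow> 'q) \<Rightarrow> (int \<Rightarrow> 'r2) \<Rightarrow> (int \<Rightarrow> 'q)) \<Rightarrow> bool" where
  "same X Q Ra Fa Rb Fb = (case X of
      XS \<Rightarrow> (\<forall>c\<in>conf Q. SF Q Ra Fa c = SF Q Rb Fb c)
    | XN \<Rightarrow> (\<forall>c\<in>conf Q. NF Ra Fa c = NF Rb Fb c))"

definition restr_ok :: "'a set \<Rightarrow> ('a \<Rightarrow> 'q) \<Rightarrow> 'q set \<Rightarrow> 'r set
    \<Rightarrow> ((int \<Rightarrow> 'q) \<Rightarrow> (int \<Rightarrow> 'r) \<Rightarrow> (int \<Rightarrow> 'q)) \<Rightarrow> bool" where
  "restr_ok Q' i Q R F \<longleftrightarrow> inj_on i Q' \<and> i ` Q' \<subseteq> Q \<and>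
     (\<forall>c\<in>conf (i ` Q'). \<forall>s\<in>conf R. F c s \<in> conf (i ` Q'))"

definition restr :: "'a set \<Rightarrow> ('a \<Rightarrow> 'q) \<Rightarrow> ((int \<Rightarrow> 'q) \<Rightarrow> (int \<Rightarrow> 'r) \<Rightarrow> (int \<Rightarrow> 'q))
    \<Rightarrow> (int \<Rightarrow> 'a) \<Rightarrow> (int \<Rightarrow> 'r) \<Rightarrow> (int \<Rightarrow> 'a)" where
  "restr Q' i F c s = (\<lambda>z. the_inv_into Q' i (F (i \<circ> c) s z))"

definition proj_ok :: "('q \<Rightarrow> 'a) \<Rightarrow> 'q set \<Rightarrow> 'a set \<Rightarrow> 'r set
    \<Rightarrow> ((int \<Rightarrow> 'q) \<Rightarrow> (int \<Rightarrow> 'r) \<Rightarrow> (int \<Rightarrow> 'q)) \<Rightarrow> bool" where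
  "proj_ok p Q Q' R F \<longleftrightarrow> p ` Q = Q' \<and>
     (\<forall>c\<in>conf Q. \<forall>c'\<in>conf Q. \<forall>s\<in>conf R. p \<circ> c = p \<circ> c' \<longrightarrow> p \<circ> F c s = p \<circ> F c' s)"

definition proj :: "('q \<Rightarrow> 'a) \<Rightarrow> 'q set \<Rightarrow> ((int \<Rightarrow> 'q) \<Rightarrow> (int \<Rightarrow> 'r) \<Rightarrow> (int \<Rightarrow> 'q))
    \<Rightarrow> (int \<Rightarrow> 'a) \<Rightarrow> (int \<Rightarrow> 'r) \<Rightarrow> (int \<Rightarrow> 'a)" where
  "proj p Q F c' s = p \<circ> F (SOME c. c \<in> conf Q \<and> p \<circ> c = c') s"

definition sim_i :: "xmode \<Rightarrow> ('q1, 'r1) sca \<Rightarrow> ('q2, 'r2) sca \<Rightarrow> bool" where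
  "sim_i X A1 A2 \<longleftrightarrow> (\<exists>m1 m2 t1 t2 k1 k2 (i :: 'q1 list \<Rightarrow> 'q2 list).
     m1 \<ge> 1 \<and> m2 \<ge> 1 \<and> t1 \<ge> 1 \<and> t2 \<ge> 1 \<and>
     restr_ok (states_pow (states A1) m1) i (states_pow (states A2) m2)
              (rand_pow (rands A2) m2 t2) (rescale A2 m2 t2 k2) \<and>
     same X (states_pow (states A1) m1) (rand_pow (rands A1) m1 t1) (rescale A1 m1 t1 k1)
            (rand_pow (rands A2) m2 t2)
            (restr (states_pow (states A1) m1) i (rescale A2 m2 t2 k2)))"

definition sim_pi :: "xmode \<Rightarrow> ('q1, 'r1) sca \<Rightarrow> ('q2, 'r2) sca \<Rightarrow> bool" where
  "sim_pi X A1 A2 \<longleftrightarrow> (\<exists>m1 m2 t1 t2 k1 k2 (p :: 'q2 list \<Rightarrow> 'q1 list).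
     m1 \<ge> 1 \<and> m2 \<ge> 1 \<and> t1 \<ge> 1 \<and> t2 \<ge> 1 \<and>
     proj_ok p (states_pow (states A2) m2) (states_pow (states A1) m1)
             (rand_pow (rands A2) m2 t2) (rescale A2 m2 t2 k2) \<and>
     same X (states_pow (states A1) m1) (rand_pow (rands A1) m1 t1) (rescale A1 m1 t1 k1)
            (rand_pow (rands A2) m2 t2)
            (proj p (states_pow (states A2) m2) (rescale A2 m2 t2 k2)))"

text \<open>Intermediate state set Q' of the restriction is taken inside the type of Q2^m2 lists
  (w.l.o.g., since it injects into Q2^m2).\<close>
definition sim_m :: "xmode \<Rightarrow> ('q1, 'r1) sca \<Rightarrow> ('q2, 'r2) sca \<Rightarrow> bool" where
  "sim_m X A1 A2 \<longleftrightarrow> (\<exists>m1 m2 t1 t2 k1 k2 (Q' :: 'q2 list set) (i :: 'q2 list \<Rightarrow> 'q2 list)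
                          (p :: 'q2 list \<Rightarrow> 'q1 list).
     m1 \<ge> 1 \<and> m2 \<ge> 1 \<and> t1 \<ge> 1 \<and> t2 \<ge> 1 \<and>
     restr_ok Q' i (states_pow (states A2) m2) (rand_pow (rands A2) m2 t2) (rescale A2 m2 t2 k2) \<and>
     proj_ok p Q' (states_pow (states A1) m1) (rand_pow (rands A2) m2 t2)
             (restr Q' i (rescale A2 m2 t2 k2)) \<and>
     same X (states_pow (states A1) m1) (rand_pow (rands A1) m1 t1) (rescale A1 m1 t1 k1)
            (rand_pow (rands A2) m2 t2)
            (proj p Q' (restr Q' i (rescale A2 m2 t2 k2))))"

end

theory Submission
  imports Defs
begin


definition loc :: "(('i \<Rightarrow> 'a) \<Rightarrow> ('j \<Rightarrow> 'b)) \<Rightarrow> bool" where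
  "loc G \<longleftrightarrow> (\<forall>z. \<exists>W. finite W \<and> (\<forall>s s'. (\<forall>w\<in>W. s w = s' w) \<longrightarrow> G s z = G s' z))"

lemma giter_loc:
  fixes c :: "int \<Rightarrow> 'q" and m :: nat and A :: "('q,'r) sca"
  shows "\<forall>z. \<exists>W. finite W \<and> (\<forall>S S'. (\<forall>w\<in>W. S w = S' w) \<longrightarrow>
     giter (GF A) n c (\<lambda>i. unblk m (\<lambda>j. S j ! i)) z = giter (GF A) n c (\<lambda>i. unblk m (\<lambda>j. S' j ! i)) z)"
proof (induction n)
  case 0
  then show ?case by auto
next
  case (Suc n)
  then obtain Wf where Wf: "\<And>z. finite (Wf z)" "\<And>z S S'. (\<forall>w\<in>Wf z. S w = S' w) \<Longrightarrow>
     giter (GF A) n c (\<lambda>i. unblk m (\<lambda>j. S j ! i)) z = giter (GF A) n c (\<lambda>i. unblk m (\<lambda>j. S' j ! i)) z"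
    by metis
  show ?case
  proof
    fix z
    let ?W = "(\<Union>v\<in>set (nbh A). Wf (z + v)) \<union> (\<lambda>v. (z + v) div int m) ` set (rnbh A)"
    show "\<exists>W. finite W \<and> (\<forall>S S'. (\<forall>w\<in>W. S w = S' w) \<longrightarrow>
     giter (GF A) (Suc n) c (\<lambda>i. unblk m (\<lambda>j. S j ! i)) z = giter (GF A) (Suc n) c (\<lambda>i. unblk m (\<lambda>j. S' j ! i)) z)"
    proof (intro exI conjI allI impI)
      show "finite ?W" using Wf(1) by auto
      fix S S' :: "int \<Rightarrow> 'r list list" assume a: "\<forall>w\<in>?W. S w = S' w"
      have 1: "map (\<lambda>v. giter (GF A) n c (\<lambda>i. unblk m (\<lambda>j. S j ! i)) (z + v)) (nbh A)
             = map (\<lambda>v. giter (GF A) n c (\<lambda>i. unblk m (\<lambda>j. S' j ! i)) (z + v)) (nbh A)"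
      proof (rule map_cong[OF refl])
        fix v assume "v \<in> set (nbh A)"
        then show "giter (GF A) n c (\<lambda>i. unblk m (\<lambda>j. S j ! i)) (z + v) = giter (GF A) n c (\<lambda>i. unblk m (\<lambda>j. S' j ! i)) (z + v)"
          using a by (intro Wf(2)) auto
      qed
      have 2: "map (\<lambda>v. unblk m (\<lambda>j. S j ! n) (z + v)) (rnbh A)
             = map (\<lambda>v. unblk m (\<lambda>j. S' j ! n) (z + v)) (rnbh A)"
        using a by (auto simp: unblk_def intro!: map_cong)
      show "giter (GF A) (Suc n) c (\<lambda>i. unblk m (\<lambda>j. S j ! i)) z = giter (GF A) (Suc n) c (\<lambda>i. unblk m (\<lambda>j. S' j ! i)) z"
        by (simp only: giter.simps GF_def 1 2)
    qed
  qed
qed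

lemma rescale_loc: fixes A :: "('q,'r) sca" shows "loc (rescale A m t k c)"
  unfolding loc_def
proof
  fix z
  obtain Wf where Wf: "\<And>z. finite (Wf z)" "\<And>z S S'. (\<forall>w\<in>Wf z. S w = S' w) \<Longrightarrow>
     giter (GF A) t (unblk m c) (\<lambda>i. unblk m (\<lambda>j. S j ! i)) z = giter (GF A) t (unblk m c) (\<lambda>i. unblk m (\<lambda>j. S' j ! i)) z"
    using giter_loc[of A t "unblk m c" m] by metis
  let ?W = "\<Union>j\<in>{0..<m}. Wf (int m * z + int j + k)"
  show "\<exists>W. finite W \<and> (\<forall>s s'. (\<forall>w\<in>W. s w = s' w) \<longrightarrow> rescale A m t k c s z = rescale A m t k c s' z)"
  proof (intro exI conjI allI impI)
    show "finite ?W" using Wf(1) by auto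
    fix s s' :: "int \<Rightarrow> 'r list list" assume a: "\<forall>w\<in>?W. s w = s' w"
    have "map (\<lambda>j. giter (GF A) t (unblk m c) (\<lambda>i. unblk m (\<lambda>j. s j ! i)) (int m * z + int j + k)) [0..<m]
        = map (\<lambda>j. giter (GF A) t (unblk m c) (\<lambda>i. unblk m (\<lambda>j. s' j ! i)) (int m * z + int j + k)) [0..<m]"
    proof (rule map_cong[OF refl])
      fix j assume "j \<in> set [0..<m]"
      then show "giter (GF A) t (unblk m c) (\<lambda>i. unblk m (\<lambda>j. s j ! i)) (int m * z + int j + k) = giter (GF A) t (unblk m c) (\<lambda>i. unblk m (\<lambda>j. s' j ! i)) (int m * z + int j + k)"
        using a by (intro Wf(2)) auto
    qed
    then show "rescale A m t k c s z = rescale A m t k c s' z"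
      unfolding rescale_def blk_def shift_def by simp
  qed
qed

lemma restr_loc: "loc (F (i \<circ> c)) \<Longrightarrow> loc (restr Q' i F c)"
  unfolding loc_def restr_def
proof
  fix z assume "\<forall>z. \<exists>W. finite W \<and> (\<forall>s s'. (\<forall>w\<in>W. s w = s' w) \<longrightarrow> F (i \<circ> c) s z = F (i \<circ> c) s' z)"
  then obtain W where W: "finite W" "\<And>s s'. (\<forall>w\<in>W. s w = s' w) \<Longrightarrow> F (i \<circ> c) s z = F (i \<circ> c) s' z" by blast
  then show "\<exists>W. finite W \<and> (\<forall>s s'. (\<forall>w\<in>W. s w = s' w) \<longrightarrow> the_inv_into Q' i (F (i \<circ> c) s z) = the_inv_into Q' i (F (i \<circ> c) s' z))"
    by (intro exI[of _ W] conjI allI impI) (auto intro: W(1) dest: W(2))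
qed

lemma proj_loc: assumes "\<And>c. loc (F c)" shows "loc (proj p Q F c)"
  unfolding loc_def proj_def
proof
  fix z
  obtain W where W: "finite W" "\<And>s s'. (\<forall>w\<in>W. s w = s' w) \<Longrightarrow> F (SOME c0. c0 \<in> conf Q \<and> p \<circ> c0 = c) s z = F (SOME c0. c0 \<in> conf Q \<and> p \<circ> c0 = c) s' z"
    using assms[of "SOME c0. c0 \<in> conf Q \<and> p \<circ> c0 = c"] unfolding loc_def by blast
  then show "\<exists>W. finite W \<and> (\<forall>s s'. (\<forall>w\<in>W. s w = s' w) \<longrightarrow> (p \<circ> F (SOME c0. c0 \<in> conf Q \<and> p \<circ> c0 = c) s) z = (p \<circ> F (SOME c0. c0 \<in> conf Q \<and> p \<circ> c0 = c) s') z)"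
    by (intro exI[of _ W] conjI allI impI) (auto intro: W(1) dest: W(2))
qed




lemma conf_PiE: "PiE UNIV (\<lambda>_. R) = conf R"
  by (auto simp: conf_def PiE_def extensional_def Pi_def)

lemma space_RM: "space (PiM (UNIV::int set) (\<lambda>_. uniform_count_measure R)) = conf R"
  by (simp add: space_PiM space_uniform_count_measure conf_PiE)

lemma space_QM: "space (PiM (UNIV::int set) (\<lambda>_. count_space Q)) = conf Q"
  by (simp add: space_PiM conf_PiE)

lemma comp_eq_sets:
  assumes "{a} \<in> sets M"
  shows "{y \<in> space (PiM (UNIV::int set) (\<lambda>_. M)). y w = a} \<in> sets (PiM (UNIV::int set) (\<lambda>_. M))"
proof -
  have "(\<lambda>y. y w) -` {a} \<inter> space (PiM (UNIV::int set) (\<lambda>_. M)) \<in> sets (PiM (UNIV::int set) (\<lambda>_. M))"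
    by (rule measurable_sets[OF measurable_component_singleton[of w UNIV "\<lambda>_. M"] assms]) simp
  moreover have "(\<lambda>y. y w) -` {a} \<inter> space (PiM (UNIV::int set) (\<lambda>_. M)) = {y \<in> space (PiM (UNIV::int set) (\<lambda>_. M)). y w = a}"
    by auto
  ultimately show ?thesis by simp
qed

lemma loc_meas:
  fixes G :: "(int \<Rightarrow> 'r) \<Rightarrow> (int \<Rightarrow> 'q)"
  assumes "loc G" "finite R" "\<forall>s\<in>conf R. G s \<in> conf Q"
  shows "G \<in> measurable (PiM (UNIV::int set) (\<lambda>_. uniform_count_measure R)) (PiM (UNIV::int set) (\<lambda>_. count_space Q))"
proof (rule measurable_PiM_single)
  show "G \<in> space (PiM (UNIV::int set) (\<lambda>_. uniform_count_measure R)) \<rightarrow> (\<Pi>\<^sub>E i\<in>UNIV. space (count_space Q))"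
    using assms(3) by (simp add: space_RM conf_PiE)
  fix A z assume A: "A \<in> sets (count_space Q)"
  obtain W where W: "finite W" "\<And>s s'. (\<forall>w\<in>W. s w = s' w) \<Longrightarrow> G s z = G s' z"
    using assms(1) unfolding loc_def by blast
  define U where "U = (\<lambda>s. restrict s W) ` {s\<in>conf R. G s z \<in> A}"
  have UW: "U \<subseteq> PiE W (\<lambda>_. R)" unfolding U_def by (auto simp: conf_def)
  have fU: "finite U" using finite_PiE[OF W(1), of "\<lambda>_. R"] assms(2) UW
    by (meson finite_subset)
  have eq: "{\<omega> \<in> space (PiM (UNIV::int set) (\<lambda>_. uniform_count_measure R)). G \<omega> z \<in> A}
      = {\<omega> \<in> space (PiM (UNIV::int set) (\<lambda>_. uniform_count_measure R)). \<exists>u\<in>U. \<forall>w\<in>W. \<omega> w = u w}"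
  proof (intro Collect_cong conj_cong refl iffI)
    fix \<omega> assume "\<omega> \<in> space (PiM (UNIV::int set) (\<lambda>_. uniform_count_measure R))" "G \<omega> z \<in> A"
    then show "\<exists>u\<in>U. \<forall>w\<in>W. \<omega> w = u w" unfolding U_def space_RM
      by (intro bexI[of _ "restrict \<omega> W"]) auto
  next
    fix \<omega> assume "\<exists>u\<in>U. \<forall>w\<in>W. \<omega> w = u w"
    then obtain s where s: "s \<in> conf R" "G s z \<in> A" "\<forall>w\<in>W. \<omega> w = s w" unfolding U_def by auto
    then have "G \<omega> z = G s z" by (intro W(2)) auto
    then show "G \<omega> z \<in> A" using s by simp
  qed
  show "{\<omega> \<in> space (PiM (UNIV::int set) (\<lambda>_. uniform_count_measure R)). G \<omega> z \<in> A}
      \<in> sets (PiM (UNIV::int set) (\<lambda>_. uniform_count_measure R))"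
    unfolding eq
  proof (rule sets.sets_Collect_finite_Ex[OF _ fU])
    fix u assume u: "u \<in> U"
    show "{\<omega> \<in> space (PiM (UNIV::int set) (\<lambda>_. uniform_count_measure R)). \<forall>w\<in>W. \<omega> w = u w}
      \<in> sets (PiM (UNIV::int set) (\<lambda>_. uniform_count_measure R))"
    proof (rule sets.sets_Collect_finite_All[OF _ W(1)])
      fix w assume "w \<in> W"
      then have "u w \<in> R" using u UW by auto
      then show "{\<omega> \<in> space (PiM (UNIV::int set) (\<lambda>_. uniform_count_measure R)). \<omega> w = u w}
        \<in> sets (PiM (UNIV::int set) (\<lambda>_. uniform_count_measure R))"
        by (intro comp_eq_sets) (simp add: sets_uniform_count_measure)
    qed
  qed
qed

lemma loc_cont:
  fixes G :: "(int \<Rightarrow> 'r) \<Rightarrow> (int \<Rightarrow> 'q)"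
  assumes "loc G" "\<forall>s\<in>conf R. G s \<in> conf Q"
  shows "continuous_map (product_topology (\<lambda>_. discrete_topology R) UNIV)
                        (product_topology (\<lambda>_. discrete_topology Q) UNIV) G"
  unfolding continuous_map_componentwise_UNIV
proof
  fix z
  obtain W where W: "finite W" "\<And>s s'. (\<forall>w\<in>W. s w = s' w) \<Longrightarrow> G s z = G s' z"
    using assms(1) unfolding loc_def by blast
  have top: "topspace (product_topology (\<lambda>_. discrete_topology R) (UNIV::int set)) = conf R"
    by (simp add: conf_PiE)
  show "continuous_map (product_topology (\<lambda>_. discrete_topology R) UNIV) (discrete_topology Q) (\<lambda>x. G x z)"
    unfolding continuous_map_def
  proof (intro conjI allI impI)
    show "(\<lambda>x. G x z) \<in> topspace (product_topology (\<lambda>_. discrete_topology R) UNIV) \<rightarrow> topspace (discrete_topology Q)"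
      using assms(2) unfolding top by (auto simp: conf_def)
    fix S assume "openin (discrete_topology Q) S"
    show "openin (product_topology (\<lambda>_. discrete_topology R) UNIV)
          {x \<in> topspace (product_topology (\<lambda>_. discrete_topology R) UNIV). G x z \<in> S}"
      unfolding openin_product_topology_alt top
    proof
      fix x assume x: "x \<in> {x \<in> conf R. G x z \<in> S}"
      define V where "V = (\<lambda>i. if i \<in> W then {x i} else R)"
      show "\<exists>U. finite {i \<in> UNIV. U i \<noteq> topspace (discrete_topology R)} \<and>
               (\<forall>i\<in>UNIV. openin (discrete_topology R) (U i)) \<and> x \<in> Pi\<^sub>E UNIV U \<and> Pi\<^sub>E UNIV U \<subseteq> {x \<in> conf R. G x z \<in> S}"
      proof (intro exI[of _ V] conjI)
        show "finite {i \<in> UNIV. V i \<noteq> topspace (discrete_topology R)}"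
          by (rule finite_subset[OF _ W(1)]) (auto simp: V_def)
        show "\<forall>i\<in>UNIV. openin (discrete_topology R) (V i)"
          using x by (auto simp: V_def conf_def)
        show "x \<in> Pi\<^sub>E UNIV V" using x by (auto simp: V_def conf_def)
        show "Pi\<^sub>E UNIV V \<subseteq> {x \<in> conf R. G x z \<in> S}"
        proof
          fix y assume y: "y \<in> Pi\<^sub>E UNIV V"
          have "\<forall>i. y i \<in> V i" using y by auto
          have yi: "y i \<in> (if i \<in> W then {x i} else R)" for i
            using \<open>\<forall>i. y i \<in> V i\<close> unfolding V_def by blast
          have "y \<in> conf R" unfolding conf_def
          proof (intro CollectI allI)
            fix i show "y i \<in> R" using yi[of i] x by (cases "i \<in> W") (auto simp: conf_def)
          qed
          moreover have "\<forall>w\<in>W. y w = x w" using yi by (metis singletonD)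
          moreover have "G y z = G x z" using calculation(2) by (intro W(2)) auto
          ultimately show "y \<in> {x \<in> conf R. G x z \<in> S}" using x by simp
        qed
      qed
    qed
  qed
qed




lemma NF_sub:
  fixes Fa :: "(int \<Rightarrow> 'q) \<Rightarrow> (int \<Rightarrow> 'ra) \<Rightarrow> (int \<Rightarrow> 'q)"
    and Fb :: "(int \<Rightarrow> 'q) \<Rightarrow> (int \<Rightarrow> 'rb) \<Rightarrow> (int \<Rightarrow> 'q)"
  assumes Ra: "finite Ra" "Ra \<noteq> {}" and Rb: "finite Rb" "Rb \<noteq> {}"
    and la: "loc (Fa c)" and lb: "loc (Fb c)"
    and ra: "\<forall>s\<in>conf Ra. Fa c s \<in> conf Q" and rb: "\<forall>s\<in>conf Rb. Fb c s \<in> conf Q"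
    and eq: "SF Q Ra Fa c = SF Q Rb Fb c"
  shows "NF Ra Fa c \<subseteq> NF Rb Fb c"
proof
  fix x assume "x \<in> NF Ra Fa c"
  then obtain s where s: "s \<in> conf Ra" "x = Fa c s" unfolding NF_def by auto
  have xQ: "x \<in> conf Q" using s ra by simp
  show "x \<in> NF Rb Fb c"
  proof (rule ccontr)
    assume nx: "x \<notin> NF Rb Fb c"
    define K where "K = Fb c ` conf Rb"
    define T where "T = product_topology (\<lambda>_. discrete_topology Q) (UNIV::int set)"
    have topT: "topspace T = conf Q" by (simp add: T_def conf_PiE)
    have cs: "compact_space (product_topology (\<lambda>_. discrete_topology Rb) (UNIV::int set))"
      using Rb by (simp add: compact_space_product_topology compact_space_discrete_topology)
    have "compactin T K"
    proof -
      have "compactin (product_topology (\<lambda>_. discrete_topology Rb) (UNIV::int set))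
             (topspace (product_topology (\<lambda>_. discrete_topology Rb) (UNIV::int set)))"
        using cs by (simp add: compact_space_def)
      from image_compactin[OF this loc_cont[OF lb rb]] show ?thesis
        by (simp add: K_def T_def conf_PiE)
    qed
    then have "closedin T K"
      by (intro compactin_imp_closedin) (simp_all add: T_def Hausdorff_space_product_topology)
    then have op: "openin T (conf Q - K)" unfolding closedin_def topT by simp
    have "x \<in> conf Q - K" using xQ nx by (simp add: K_def NF_def)
    then obtain U where U: "finite {i \<in> UNIV. U i \<noteq> Q}" "x \<in> Pi\<^sub>E UNIV U" "Pi\<^sub>E UNIV U \<subseteq> conf Q - K"
    proof -
      have "\<forall>y\<in>conf Q - K. \<exists>U. finite {i \<in> UNIV. U i \<noteq> topspace (discrete_topology Q)} \<and>
               (\<forall>i\<in>UNIV. openin (discrete_topology Q) (U i)) \<and> y \<in> Pi\<^sub>E UNIV U \<and> Pi\<^sub>E UNIV U \<subseteq> conf Q - K"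
        using op unfolding T_def openin_product_topology_alt .
      then obtain U where "finite {i \<in> UNIV. U i \<noteq> topspace (discrete_topology Q)}"
          "x \<in> Pi\<^sub>E UNIV U" "Pi\<^sub>E UNIV U \<subseteq> conf Q - K"
        using \<open>x \<in> conf Q - K\<close> by blast
      then show ?thesis using that by simp
    qed
    define W0 where "W0 = {i \<in> UNIV. U i \<noteq> Q}"
    define C where "C = {y \<in> space (PiM (UNIV::int set) (\<lambda>_. count_space Q)). \<forall>w\<in>W0. y w = x w}"
    have W0: "finite W0" using U(1) by (simp add: W0_def)
    have Csets: "C \<in> sets (PiM (UNIV::int set) (\<lambda>_. count_space Q))"
      unfolding C_def
    proof (rule sets.sets_Collect_finite_All[OF _ W0])
      fix w assume "w \<in> W0"
      have "x w \<in> Q" using xQ by (simp add: conf_def)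
      then show "{y \<in> space (PiM (UNIV::int set) (\<lambda>_. count_space Q)). y w = x w}
        \<in> sets (PiM (UNIV::int set) (\<lambda>_. count_space Q))"
        by (intro comp_eq_sets) simp
    qed
    have CK: "y \<notin> K" if "y \<in> C" for y
    proof -
      have "y \<in> Pi\<^sub>E UNIV U"
      proof -
        have "y i \<in> U i" for i
        proof (cases "i \<in> W0")
          case True then show ?thesis using that U(2) by (auto simp: C_def)
        next
          case False then have "U i = Q" by (simp add: W0_def)
          then show ?thesis using that by (simp add: C_def space_QM conf_def)
        qed
        then show ?thesis by auto
      qed
      then show ?thesis using U(3) by auto
    qed
    have mb: "Fb c \<in> measurable (PiM (UNIV::int set) (\<lambda>_. uniform_count_measure Rb)) (PiM (UNIV::int set) (\<lambda>_. count_space Q))"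
      by (rule loc_meas[OF lb Rb(1) rb])
    have ma: "Fa c \<in> measurable (PiM (UNIV::int set) (\<lambda>_. uniform_count_measure Ra)) (PiM (UNIV::int set) (\<lambda>_. count_space Q))"
      by (rule loc_meas[OF la Ra(1) ra])
    have "emeasure (SF Q Rb Fb c) C = emeasure (PiM (UNIV::int set) (\<lambda>_. uniform_count_measure Rb)) (Fb c -` C \<inter> space (PiM (UNIV::int set) (\<lambda>_. uniform_count_measure Rb)))"
      unfolding SF_def by (rule emeasure_distr[OF mb Csets])
    also have "Fb c -` C \<inter> space (PiM (UNIV::int set) (\<lambda>_. uniform_count_measure Rb)) = {}"
      using CK by (auto simp: space_RM K_def)
    finally have zb: "emeasure (SF Q Rb Fb c) C = 0" by simp
    have "\<exists>Wf. \<forall>z. finite (Wf z) \<and> (\<forall>s s'. (\<forall>w\<in>Wf z. s w = s' w) \<longrightarrow> Fa c s z = Fa c s' z)"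
      using la unfolding loc_def by (rule choice)
    then obtain Wf where Wf0: "\<forall>z. finite (Wf z) \<and> (\<forall>s s'. (\<forall>w\<in>Wf z. s w = s' w) \<longrightarrow> Fa c s z = Fa c s' z)"
      by blast
    have Wf: "\<And>z. finite (Wf z)" "\<And>z s s'. (\<forall>w\<in>Wf z. s w = s' w) \<Longrightarrow> Fa c s z = Fa c s' z"
      using Wf0 by blast+
    define W' where "W' = \<Union> (Wf ` W0)"
    have fW': "finite W'" using W0 Wf(1) by (simp add: W'_def)
    define D where "D = prod_emb UNIV (\<lambda>_::int. uniform_count_measure Ra) W' (PiE W' (\<lambda>w. {s w}))"
    have "emeasure (PiM (UNIV::int set) (\<lambda>_. uniform_count_measure Ra)) D
        = (\<Prod>w\<in>W'. emeasure (uniform_count_measure Ra) {s w})"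
      unfolding D_def
      by (rule emeasure_PiM_emb) (use Ra s in \<open>auto simp: prob_space_uniform_count_measure fW' sets_uniform_count_measure conf_def\<close>)
    also have "\<dots> = (\<Prod>w\<in>W'. ennreal (1 / real (card Ra)))"
    proof (rule prod.cong[OF refl])
      fix w assume "w \<in> W'"
      have "s w \<in> Ra" using s by (simp add: conf_def)
      then show "emeasure (uniform_count_measure Ra) {s w} = ennreal (1 / real (card Ra))"
        using emeasure_uniform_count_measure[OF Ra(1), of "{s w}"] by simp
    qed
    also have "\<dots> = (ennreal (1 / real (card Ra))) ^ card W'" by simp
    finally have Dm: "emeasure (PiM (UNIV::int set) (\<lambda>_. uniform_count_measure Ra)) D = (ennreal (1 / real (card Ra))) ^ card W'" .
    have "card Ra > 0" using Ra by (simp add: card_gt_0_iff)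
    then have Dnz: "(ennreal (1 / real (card Ra))) ^ card W' \<noteq> 0"
      by (simp add: power_eq_0_iff ennreal_eq_0_iff)
    have DC: "D \<subseteq> Fa c -` C \<inter> space (PiM (UNIV::int set) (\<lambda>_. uniform_count_measure Ra))"
    proof
      fix s' assume "s' \<in> D"
      then have h: "restrict s' W' \<in> PiE W' (\<lambda>w. {s w})" "\<forall>i. s' i \<in> Ra"
        unfolding D_def prod_emb_iff by (simp_all add: space_uniform_count_measure)
      have s': "s' \<in> conf Ra" "\<forall>w\<in>W'. s' w = s w"
      proof -
        show "s' \<in> conf Ra" using h(2) by (simp add: conf_def)
        show "\<forall>w\<in>W'. s' w = s w"
        proof
          fix w assume "w \<in> W'"
          from PiE_mem[OF h(1) this] \<open>w \<in> W'\<close> show "s' w = s w" by simp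
        qed
      qed
      have "Fa c s' w = x w" if "w \<in> W0" for w
      proof -
        have "Fa c s' w = Fa c s w" using s' that by (intro Wf(2)) (auto simp: W'_def)
        then show ?thesis using s by simp
      qed
      then show "s' \<in> Fa c -` C \<inter> space (PiM (UNIV::int set) (\<lambda>_. uniform_count_measure Ra))"
        using s' ra by (auto simp: C_def space_QM space_RM)
    qed
    have "emeasure (PiM (UNIV::int set) (\<lambda>_. uniform_count_measure Ra)) D
       \<le> emeasure (PiM (UNIV::int set) (\<lambda>_. uniform_count_measure Ra)) (Fa c -` C \<inter> space (PiM (UNIV::int set) (\<lambda>_. uniform_count_measure Ra)))"
      by (rule emeasure_mono[OF DC]) (rule measurable_sets[OF ma Csets])
    also have "\<dots> = emeasure (SF Q Ra Fa c) C"
      unfolding SF_def by (rule emeasure_distr[OF ma Csets, symmetric])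
    also have "\<dots> = 0" using zb eq by simp
    finally show False using Dm Dnz by simp
  qed
qed




lemma NF_eq:
  fixes Fa :: "(int \<Rightarrow> 'q) \<Rightarrow> (int \<Rightarrow> 'ra) \<Rightarrow> (int \<Rightarrow> 'q)"
    and Fb :: "(int \<Rightarrow> 'q) \<Rightarrow> (int \<Rightarrow> 'rb) \<Rightarrow> (int \<Rightarrow> 'q)"
  assumes "finite Ra" "Ra \<noteq> {}" "finite Rb" "Rb \<noteq> {}"
    and "\<And>c. loc (Fa c)" "\<And>c. loc (Fb c)"
    and "\<forall>c\<in>conf Q. \<forall>s\<in>conf Ra. Fa c s \<in> conf Q" "\<forall>c\<in>conf Q. \<forall>s\<in>conf Rb. Fb c s \<in> conf Q"
    and "same XS Q Ra Fa Rb Fb"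
  shows "same XN Q Ra Fa Rb Fb"
  unfolding same_def xmode.case
proof
  fix c assume c: "c \<in> conf Q"
  have e: "SF Q Ra Fa c = SF Q Rb Fb c" using assms(9) c unfolding same_def by simp
  show "NF Ra Fa c = NF Rb Fb c"
  proof
    show "NF Ra Fa c \<subseteq> NF Rb Fb c"
      by (rule NF_sub[OF assms(1-4) assms(5,6)]) (use assms(7,8) c e in auto)
    show "NF Rb Fb c \<subseteq> NF Ra Fa c"
      by (rule NF_sub[OF assms(3,4,1,2) assms(6,5)]) (use assms(7,8) c e in auto)
  qed
qed

lemma states_pow_finite: "finite R \<Longrightarrow> finite (states_pow R m)"
  unfolding states_pow_def using finite_lists_length_eq[of R m] by (simp add: conj_commute)

lemma rand_pow_finite: "finite R \<Longrightarrow> finite (rand_pow R m t)"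
proof -
  assume "finite R"
  then have "finite {xs. set xs \<subseteq> states_pow R m \<and> length xs = t}"
    by (intro finite_lists_length_eq states_pow_finite)
  moreover have "rand_pow R m t = {xs. set xs \<subseteq> states_pow R m \<and> length xs = t}"
    unfolding rand_pow_def by auto
  ultimately show ?thesis by simp
qed

lemma rand_pow_ne: "R \<noteq> {} \<Longrightarrow> rand_pow R m t \<noteq> {}"
proof -
  assume "R \<noteq> {}" then obtain r where "r \<in> R" by blast
  then have "replicate t (replicate m r) \<in> rand_pow R m t"
    by (auto simp: rand_pow_def states_pow_def)
  then show ?thesis by blast
qed

lemma GF_range:
  assumes A: "is_sca A" and g: "g \<in> conf (states A)" and u: "u \<in> conf (rands A)"
  shows "GF A g u \<in> conf (states A)"
proof -
  have Rl: "\<And>qs rs. length qs = length (nbh A) \<Longrightarrow> set qs \<subseteq> states A \<Longrightarrow> length rs = length (rnbh A) \<Longrightarrow> set rs \<subseteq> rands A \<Longrightarrow> rule A qs rs \<in> states A"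
    using A unfolding is_sca_def by blast
  have "rule A (map (\<lambda>v. g (z + v)) (nbh A)) (map (\<lambda>v. u (z + v)) (rnbh A)) \<in> states A" for z
    by (rule Rl) (use g u in \<open>auto simp: conf_def\<close>)
  then show ?thesis unfolding GF_def conf_def by simp
qed

lemma rescale_range:
  fixes A :: "('q,'r) sca"
  assumes A: "is_sca A" and m: "m \<ge> 1"
  shows "\<forall>c\<in>conf (states_pow (states A) m). \<forall>s\<in>conf (rand_pow (rands A) m t).
           rescale A m t k c s \<in> conf (states_pow (states A) m)"
proof (intro ballI)
  fix c s assume c: "c \<in> conf (states_pow (states A) m)" and s: "s \<in> conf (rand_pow (rands A) m t)"
  have mpos: "int m > 0" using m by simp
  have uc: "unblk m c \<in> conf (states A)"
    unfolding conf_def unblk_def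
  proof (intro CollectI allI)
    fix z
    have cz: "c (z div int m) \<in> states_pow (states A) m" using c by (simp add: conf_def)
    have "nat (z mod int m) < m" using mpos by (simp add: nat_less_iff)
    then have "c (z div int m) ! nat (z mod int m) \<in> set (c (z div int m))"
      using cz by (simp add: states_pow_def)
    then show "c (z div int m) ! nat (z mod int m) \<in> states A" using cz by (auto simp: states_pow_def)
  qed
  have us: "unblk m (\<lambda>j. s j ! i) \<in> conf (rands A)" if "i < t" for i
    unfolding conf_def unblk_def
  proof (intro CollectI allI)
    fix z
    have sj: "s (z div int m) \<in> rand_pow (rands A) m t" using s by (simp add: conf_def)
    then have "s (z div int m) ! i \<in> states_pow (rands A) m"
      using that by (auto simp: rand_pow_def)
    moreover have "nat (z mod int m) < m" using mpos by (simp add: nat_less_iff)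
    ultimately show "s (z div int m) ! i ! nat (z mod int m) \<in> rands A"
      by (auto simp: states_pow_def)
  qed
  have gi: "n \<le> t \<Longrightarrow> giter (GF A) n (unblk m c) (\<lambda>i. unblk m (\<lambda>j. s j ! i)) \<in> conf (states A)" for n
  proof (induction n)
    case 0 then show ?case using uc by simp
  next
    case (Suc n)
    then have IH: "giter (GF A) n (unblk m c) (\<lambda>i. unblk m (\<lambda>j. s j ! i)) \<in> conf (states A)" by simp
    have un: "unblk m (\<lambda>j. s j ! n) \<in> conf (rands A)" using us Suc.prems by simp
    show ?case unfolding giter.simps by (rule GF_range[OF A IH un])
  qed
  have g: "giter (GF A) t (unblk m c) (\<lambda>i. unblk m (\<lambda>j. s j ! i)) \<in> conf (states A)" by (rule gi) simp
  show "rescale A m t k c s \<in> conf (states_pow (states A) m)"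
    using g unfolding rescale_def blk_def shift_def conf_def states_pow_def by auto
qed

lemma restr_range:
  assumes "restr_ok Q' i Q R F"
  shows "\<forall>c\<in>conf Q'. \<forall>s\<in>conf R. restr Q' i F c s \<in> conf Q'"
proof (intro ballI)
  fix c s assume c: "c \<in> conf Q'" and s: "s \<in> conf R"
  have "i \<circ> c \<in> conf (i ` Q')" using c by (auto simp: conf_def)
  then have "F (i \<circ> c) s \<in> conf (i ` Q')" using assms s unfolding restr_ok_def by blast
  moreover have "inj_on i Q'" using assms unfolding restr_ok_def by blast
  ultimately show "restr Q' i F c s \<in> conf Q'"
    unfolding restr_def conf_def by (auto intro: the_inv_into_into)
qed

lemma proj_range:
  assumes "proj_ok p Q Q' R F" "\<forall>c\<in>conf Q. \<forall>s\<in>conf R. F c s \<in> conf Q"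
  shows "\<forall>c\<in>conf Q'. \<forall>s\<in>conf R. proj p Q F c s \<in> conf Q'"
proof (intro ballI)
  fix c' s assume c': "c' \<in> conf Q'" and s: "s \<in> conf R"
  have pQ: "p ` Q = Q'" using assms(1) unfolding proj_ok_def by blast
  have "\<forall>z. \<exists>q. q \<in> Q \<and> p q = c' z"
  proof
    fix z have "c' z \<in> p ` Q" using c' pQ by (simp add: conf_def)
    then show "\<exists>q. q \<in> Q \<and> p q = c' z" by auto
  qed
  then obtain c where "\<forall>z. c z \<in> Q \<and> p (c z) = c' z" by metis
  then have ex: "\<exists>c. c \<in> conf Q \<and> p \<circ> c = c'" by (intro exI[of _ c]) (auto simp: conf_def)
  define c0 where "c0 = (SOME c. c \<in> conf Q \<and> p \<circ> c = c')"
  have c0: "c0 \<in> conf Q" using someI_ex[OF ex] unfolding c0_def by blast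
  then have "F c0 s \<in> conf Q" using assms(2) s by blast
  then show "proj p Q F c' s \<in> conf Q'"
    unfolding proj_def c0_def[symmetric] using pQ by (auto simp: conf_def)
qed

theorem fact4:
  fixes A1 :: "('q1, 'r1) sca" and A2 :: "('q2, 'r2) sca"
  assumes "is_sca A1" and "is_sca A2"
  shows "(sim_i XS A1 A2 \<longrightarrow> sim_i XN A1 A2) \<and>
         (sim_pi XS A1 A2 \<longrightarrow> sim_pi XN A1 A2) \<and>
         (sim_m XS A1 A2 \<longrightarrow> sim_m XN A1 A2)"
proof -
  have R1: "finite (rand_pow (rands A1) m t)" "rand_pow (rands A1) m t \<noteq> {}" for m t
  proof -
    have "finite (rands A1)" "rands A1 \<noteq> {}" using assms(1) by (simp_all add: is_sca_def)
    then show "finite (rand_pow (rands A1) m t)" "rand_pow (rands A1) m t \<noteq> {}"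
      by (simp_all add: rand_pow_finite rand_pow_ne)
  qed
  have R2: "finite (rand_pow (rands A2) m t)" "rand_pow (rands A2) m t \<noteq> {}" for m t
  proof -
    have "finite (rands A2)" "rands A2 \<noteq> {}" using assms(2) by (simp_all add: is_sca_def)
    then show "finite (rand_pow (rands A2) m t)" "rand_pow (rands A2) m t \<noteq> {}"
      by (simp_all add: rand_pow_finite rand_pow_ne)
  qed
  have C1: "sim_i XN A1 A2" if "sim_i XS A1 A2"
  proof -
    from that obtain m1 m2 t1 t2 k1 k2 and i :: "'q1 list \<Rightarrow> 'q2 list" where
      h: "m1 \<ge> 1" "m2 \<ge> 1" "t1 \<ge> 1" "t2 \<ge> 1"
      "restr_ok (states_pow (states A1) m1) i (states_pow (states A2) m2)
              (rand_pow (rands A2) m2 t2) (rescale A2 m2 t2 k2)"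
      "same XS (states_pow (states A1) m1) (rand_pow (rands A1) m1 t1) (rescale A1 m1 t1 k1)
            (rand_pow (rands A2) m2 t2)
            (restr (states_pow (states A1) m1) i (rescale A2 m2 t2 k2))"
      unfolding sim_i_def by (elim exE conjE) (rule that; assumption)
    have "same XN (states_pow (states A1) m1) (rand_pow (rands A1) m1 t1) (rescale A1 m1 t1 k1)
            (rand_pow (rands A2) m2 t2)
            (restr (states_pow (states A1) m1) i (rescale A2 m2 t2 k2))"
      by (rule NF_eq[OF R1 R2 rescale_loc restr_loc[OF rescale_loc]
            rescale_range[OF assms(1) h(1)] restr_range[OF h(5)] h(6)])
    then show ?thesis unfolding sim_i_def
      by (intro exI[of _ m1] exI[of _ m2] exI[of _ t1] exI[of _ t2] exI[of _ k1] exI[of _ k2] exI[of _ i] conjI h(1-5))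
  qed
  have C2: "sim_pi XN A1 A2" if "sim_pi XS A1 A2"
  proof -
    from that obtain m1 m2 t1 t2 k1 k2 and p :: "'q2 list \<Rightarrow> 'q1 list" where
      h: "m1 \<ge> 1" "m2 \<ge> 1" "t1 \<ge> 1" "t2 \<ge> 1"
      "proj_ok p (states_pow (states A2) m2) (states_pow (states A1) m1)
             (rand_pow (rands A2) m2 t2) (rescale A2 m2 t2 k2)"
      "same XS (states_pow (states A1) m1) (rand_pow (rands A1) m1 t1) (rescale A1 m1 t1 k1)
            (rand_pow (rands A2) m2 t2)
            (proj p (states_pow (states A2) m2) (rescale A2 m2 t2 k2))"
      unfolding sim_pi_def by (elim exE conjE) (rule that; assumption)
    have "same XN (states_pow (states A1) m1) (rand_pow (rands A1) m1 t1) (rescale A1 m1 t1 k1)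
            (rand_pow (rands A2) m2 t2)
            (proj p (states_pow (states A2) m2) (rescale A2 m2 t2 k2))"
      by (rule NF_eq[OF R1 R2 rescale_loc proj_loc[OF rescale_loc]
            rescale_range[OF assms(1) h(1)] proj_range[OF h(5) rescale_range[OF assms(2) h(2)]] h(6)])
    then show ?thesis unfolding sim_pi_def
      by (intro exI[of _ m1] exI[of _ m2] exI[of _ t1] exI[of _ t2] exI[of _ k1] exI[of _ k2] exI[of _ p] conjI h(1-5))
  qed
  have C3: "sim_m XN A1 A2" if "sim_m XS A1 A2"
  proof -
    from that obtain m1 m2 t1 t2 k1 k2 and Q' :: "'q2 list set" and i :: "'q2 list \<Rightarrow> 'q2 list"
       and p :: "'q2 list \<Rightarrow> 'q1 list" where
      h: "m1 \<ge> 1" "m2 \<ge> 1" "t1 \<ge> 1" "t2 \<ge> 1"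
     "restr_ok Q' i (states_pow (states A2) m2) (rand_pow (rands A2) m2 t2) (rescale A2 m2 t2 k2)"
     "proj_ok p Q' (states_pow (states A1) m1) (rand_pow (rands A2) m2 t2)
             (restr Q' i (rescale A2 m2 t2 k2))"
     "same XS (states_pow (states A1) m1) (rand_pow (rands A1) m1 t1) (rescale A1 m1 t1 k1)
            (rand_pow (rands A2) m2 t2)
            (proj p Q' (restr Q' i (rescale A2 m2 t2 k2)))"
      unfolding sim_m_def by (elim exE conjE) (rule that; assumption)
    have "same XN (states_pow (states A1) m1) (rand_pow (rands A1) m1 t1) (rescale A1 m1 t1 k1)
            (rand_pow (rands A2) m2 t2)
            (proj p Q' (restr Q' i (rescale A2 m2 t2 k2)))"
      by (rule NF_eq[OF R1 R2 rescale_loc proj_loc[OF restr_loc[OF rescale_loc]]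
            rescale_range[OF assms(1) h(1)] proj_range[OF h(6) restr_range[OF h(5)]] h(7)])
    then show ?thesis unfolding sim_m_def
      by (intro exI[of _ m1] exI[of _ m2] exI[of _ t1] exI[of _ t2] exI[of _ k1] exI[of _ k2] exI[of _ Q'] exI[of _ i] exI[of _ p] conjI h(1-6))
  qed
  show ?thesis using C1 C2 C3 by blast
qed


end
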